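(* Let $1<p<\infty$. There is a constant $C$ depending only on $N$ and $p$ such that for every $f\in C^1(\mathbb R^N)$, $$\int_{\mathbb R^N}\big(\log(1+|\nabla f(x)|)\big)^p\,dx\le C\liminf_{\lambda\to\infty}\lambda^p\,\mathcal L^{2N}\Big(\Big\{(x,y)\in\mathbb R^N\times\mathbb R^N:\log\Big(1+\frac{|f(x)-f(y)|}{|x-y|}\Big)\frac{1}{|x-y|^{N/p}}>\lambda\Big\}\Big).$$ *)

theory Defs
  imports "HOL-Analysis.Analysis"
begin

end

theory Submission imports Defs begin

lemma ln_div6: fixes y :: real assumes "y \<ge> 0" shows "ln (1 + y) / 6 \<le> ln (1 + y/6)"
proof -
  have "1 + real 6 * (y/6) \<le> (1 + y/6) ^ 6" by (rule Bernoulli_inequality) (use assms in auto)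
  hence "ln (1 + y) \<le> ln ((1 + y/6) ^ 6)" using assms by (subst ln_le_cancel_iff) auto
  also have "\<dots> = 6 * ln (1 + y/6)" using assms by (simp add: ln_realpow)
  finally show ?thesis by simp
qed

lemma key:
  fixes f :: "'a::euclidean_space \<Rightarrow> real" and v x :: 'a and p :: real
  assumes p: "1 < p" and fm: "f \<in> borel_measurable borel" and der: "(f has_derivative (\<lambda>h. v \<bullet> h)) (at x)"
  shows "\<forall>\<^sub>F t in at_top. ennreal (unit_ball_vol (real DIM('a)) / 4 ^ DIM('a) * (ln (1 + norm v) / 6) powr p)
     \<le> ennreal (t powr p) * emeasure lborel {y. ln (1 + \<bar>f x - f y\<bar> / norm (x - y)) / norm (x - y) powr (real DIM('a) / p) > t}"
proof (cases "v = 0")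
  case True
  then show ?thesis using p by simp
next
  case False
  define N where "N = real DIM('a)"
  have N: "N > 0" unfolding N_def by simp
  define a where "a = norm v / 6"
  have a: "a > 0" using False by (simp add: a_def)
  define l where "l = ln (1 + a)"
  have l: "l > 0" using a by (simp add: l_def)
  obtain d where d: "d > 0" and dd: "\<And>y. norm (y - x) < d \<Longrightarrow> norm (f y - f x - v \<bullet> (y - x)) \<le> a * norm (y - x)"
    using der a unfolding has_derivative_at_alt by blast
  define u where "u = v /\<^sub>R norm v"
  have nu: "norm u = 1" using False by (simp add: u_def)
  have vu: "v \<bullet> h = norm v * (u \<bullet> h)" for h using False by (simp add: u_def)
  have "\<forall>\<^sub>F t in at_top. t > max 0 (l / d powr (N/p))" by (rule eventually_gt_at_top)
  then show ?thesis
  proof (rule eventually_mono)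
    fix t assume t: "t > max 0 (l / d powr (N/p))"
    have t0: "t > 0" using t by simp
    define s where "s = (l / t) powr (p / N)"
    have s0: "s > 0" using l t0 by (simp add: s_def)
    have "l / t < d powr (N/p)" using t d t0 by (simp add: field_simps)
    hence "s < (d powr (N/p)) powr (p/N)" unfolding s_def
      using l t0 p N by (intro powr_less_mono2) auto
    also have "\<dots> = d" using d p N by (simp add: powr_powr)
    finally have sd: "s < d" .
    have sN: "s powr (N/p) = l / t" unfolding s_def using l t0 p N by (simp add: powr_powr)
    define S where "S = {y. ln (1 + \<bar>f x - f y\<bar> / norm (x - y)) / norm (x - y) powr (real DIM('a) / p) > t}"
    have sub: "ball (x + (s/2) *\<^sub>R u) (s/4) \<subseteq> S"
    proof
      fix y assume y: "y \<in> ball (x + (s/2) *\<^sub>R u) (s/4)"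
      define h where "h = y - x"
      define w where "w = h - (s/2) *\<^sub>R u"
      have w: "norm w < s/4" using y by (simp add: w_def h_def dist_norm norm_minus_commute algebra_simps)
      have hw: "h = (s/2) *\<^sub>R u + w" by (simp add: w_def)
      have "norm h \<le> s/2 + norm w" unfolding hw using norm_triangle_ineq[of "(s/2) *\<^sub>R u" w] nu s0 by simp
      hence hlt: "norm h < 3 * s / 4" using w by simp
      have "s/2 \<le> norm h + norm w" using norm_triangle_ineq4[of h w] hw nu s0
        by (metis add_diff_cancel_right' norm_scaleR real_norm_def abs_of_pos half_gt_zero mult.right_neutral)
      hence hgt: "norm h > s/4" using w by simp
      have "u \<bullet> h = s/2 + u \<bullet> w" unfolding hw using nu by (simp add: inner_add_right dot_square_norm power2_eq_square)
      moreover have "\<bar>u \<bullet> w\<bar> \<le> norm w" using Cauchy_Schwarz_ineq2[of u w] nu by simp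
      ultimately have uh: "u \<bullet> h \<ge> norm h / 3" using w hlt by linarith
      have vh: "v \<bullet> h \<ge> norm v * norm h / 3" using uh vu[of h] mult_left_mono[OF uh, of "norm v"] by simp
      have "norm (f y - f x - v \<bullet> h) \<le> a * norm h" using dd[of y] hlt sd s0 by (simp add: h_def)
      hence "f y - f x \<ge> v \<bullet> h - a * norm h" by simp
      hence fge: "\<bar>f x - f y\<bar> \<ge> a * norm h" using vh unfolding a_def by linarith
      have nxy: "norm (x - y) = norm h" by (simp add: h_def norm_minus_commute)
      have hpos: "norm h > 0" using hgt s0 by linarith
      have q: "\<bar>f x - f y\<bar> / norm (x - y) \<ge> a" using fge hpos nxy by (simp add: field_simps)
      have lq: "ln (1 + \<bar>f x - f y\<bar> / norm (x - y)) \<ge> l" unfolding l_def using q a by simp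
      have "norm h powr (N/p) < s powr (N/p)" using hpos hlt s0 N p by (intro powr_less_mono2) auto
      hence rp: "norm h powr (N/p) < l / t" using sN by simp
      have rp0: "norm h powr (N/p) > 0" using hpos by simp
      have "t < l / norm h powr (N/p)" using rp rp0 t0 l by (simp add: field_simps)
      also have "\<dots> \<le> ln (1 + \<bar>f x - f y\<bar> / norm (x - y)) / norm h powr (N/p)"
        using lq rp0 by (simp add: divide_right_mono)
      finally show "y \<in> S" unfolding S_def N_def using nxy by simp
    qed
    have "emeasure lborel (ball (x + (s/2) *\<^sub>R u) (s/4)) \<le> emeasure lborel S"
      by (rule emeasure_mono[OF sub]) (unfold S_def, use fm in measurable)
    also have "emeasure lborel (ball (x + (s/2) *\<^sub>R u) (s/4)) = ennreal (unit_ball_vol N * (s/4) ^ DIM('a))"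
      using s0 by (simp add: emeasure_ball N_def)
    finally have mS: "ennreal (unit_ball_vol N * (s/4) ^ DIM('a)) \<le> emeasure lborel S" .
    have sD: "s ^ DIM('a) = (l/t) powr p"
    proof -
      have "s ^ DIM('a) = s powr N" using s0 by (simp add: N_def powr_realpow)
      also have "\<dots> = (l/t) powr p" unfolding s_def using N by (simp add: powr_powr)
      finally show ?thesis .
    qed
    have eq: "t powr p * (unit_ball_vol N * (s/4) ^ DIM('a)) = unit_ball_vol N / 4 ^ DIM('a) * l powr p"
    proof -
      have "t powr p * (unit_ball_vol N * (s/4) ^ DIM('a)) = unit_ball_vol N / 4 ^ DIM('a) * (t powr p * (l/t) powr p)"
        by (simp add: power_divide sD)
      also have "t powr p * (l/t) powr p = l powr p" using t0 l by (simp add: powr_divide)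
      finally show ?thesis .
    qed
    have "(ln (1 + norm v) / 6) powr p \<le> l powr p"
      unfolding l_def a_def using p by (intro powr_mono2 ln_div6) auto
    hence "unit_ball_vol N / 4 ^ DIM('a) * (ln (1 + norm v) / 6) powr p \<le> unit_ball_vol N / 4 ^ DIM('a) * l powr p"
      using N by (intro mult_left_mono) auto
    hence "ennreal (unit_ball_vol N / 4 ^ DIM('a) * (ln (1 + norm v) / 6) powr p) \<le> ennreal (t powr p * (unit_ball_vol N * (s/4) ^ DIM('a)))"
      unfolding eq by (rule ennreal_leI)
    also have "\<dots> = ennreal (t powr p) * ennreal (unit_ball_vol N * (s/4) ^ DIM('a))"
      using N s0 by (intro ennreal_mult) auto
    also have "\<dots> \<le> ennreal (t powr p) * emeasure lborel S" by (intro mult_left_mono mS) auto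
    finally show "ennreal (unit_ball_vol (real DIM('a)) / 4 ^ DIM('a) * (ln (1 + norm v) / 6) powr p)
     \<le> ennreal (t powr p) * emeasure lborel {y. ln (1 + \<bar>f x - f y\<bar> / norm (x - y)) / norm (x - y) powr (real DIM('a) / p) > t}"
      unfolding S_def N_def .
  qed
qed
theorem mainTheorem15:
  fixes p :: real
  assumes "1 < p"
  shows "\<exists>C::real. C \<ge> 0 \<and>
    (\<forall>(f :: 'a::euclidean_space \<Rightarrow> real) (g :: 'a \<Rightarrow> 'a).
       (\<forall>x. (f has_derivative (\<lambda>h. g x \<bullet> h)) (at x)) \<and> continuous_on UNIV g \<longrightarrow>
       (\<integral>\<^sup>+ x. ennreal ((ln (1 + norm (g x))) powr p) \<partial>lborel)
         \<le> ennreal C * Liminf at_top (\<lambda>t::real. ennreal (t powr p) *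
              emeasure (lborel :: ('a \<times> 'a) measure)
                {(x, y). ln (1 + \<bar>f x - f y\<bar> / norm (x - y)) / norm (x - y) powr (real DIM('a) / p) > t}))"
proof -
  define c0 where "c0 = unit_ball_vol (real DIM('a)) / 4 ^ DIM('a)"
  have c0: "c0 > 0" unfolding c0_def by simp
  define C where "C = 6 powr p / c0"
  have C: "C \<ge> 0" using c0 by (simp add: C_def)
  show ?thesis
  proof (intro exI[of _ C] conjI C allI impI, elim conjE)
    fix f :: "'a \<Rightarrow> real" and g :: "'a \<Rightarrow> 'a"
    assume der: "\<forall>x. (f has_derivative (\<lambda>h. g x \<bullet> h)) (at x)" and gc: "continuous_on UNIV g"
    have fc: "continuous_on UNIV f"
      using der by (meson continuous_at_imp_continuous_on has_derivative_continuous)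
    have fm: "f \<in> borel_measurable borel" using fc by (rule borel_measurable_continuous_onI)
    have gm: "g \<in> borel_measurable borel" using gc by (rule borel_measurable_continuous_onI)
    define E where "E t = {(x, y). ln (1 + \<bar>f x - f y\<bar> / norm (x - y)) / norm (x - y) powr (real DIM('a) / p) > t}" for t
    define H where "H t = ennreal (t powr p) * emeasure (lborel :: ('a \<times> 'a) measure) (E t)" for t
    define L where "L x = ennreal (c0 * (ln (1 + norm (g x)) / 6) powr p)" for x
    have Lm: "L \<in> borel_measurable lborel" unfolding L_def using gm by measurable
    have m1[measurable]: "(\<lambda>z::'a\<times>'a. f (fst z)) \<in> borel_measurable borel"
      by (rule borel_measurable_continuous_onI) (intro continuous_intros continuous_on_compose2[OF fc]; simp)
    have m2[measurable]: "(\<lambda>z::'a\<times>'a. f (snd z)) \<in> borel_measurable borel"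
      by (rule borel_measurable_continuous_onI) (intro continuous_intros continuous_on_compose2[OF fc]; simp)
    have m3[measurable]: "(\<lambda>z::'a\<times>'a. norm (fst z - snd z)) \<in> borel_measurable borel"
      by (rule borel_measurable_continuous_onI) (intro continuous_intros)
    have Fm: "(\<lambda>z::'a\<times>'a. ln (1 + \<bar>f (fst z) - f (snd z)\<bar> / norm (fst z - snd z)) / norm (fst z - snd z) powr (real DIM('a) / p)) \<in> borel_measurable borel"
      by measurable
    have Em: "E t \<in> sets (lborel \<Otimes>\<^sub>M lborel)" for t
    proof -
      have "E t = {z \<in> space borel. t < ln (1 + \<bar>f (fst z) - f (snd z)\<bar> / norm (fst z - snd z)) / norm (fst z - snd z) powr (real DIM('a) / p)}"
        by (auto simp: E_def)
      also have "\<dots> \<in> sets borel" using Fm by measurable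
      finally show ?thesis unfolding lborel_prod by simp
    qed
    have sec: "Pair x -` E t = {y. ln (1 + \<bar>f x - f y\<bar> / norm (x - y)) / norm (x - y) powr (real DIM('a) / p) > t}" for x t
      by (auto simp: E_def)
    define h where "h t x = ennreal (t powr p) * emeasure lborel (Pair x -` E t)" for t x
    have hm: "h t \<in> borel_measurable lborel" for t
      unfolding h_def using lborel.measurable_emeasure_Pair[OF Em] by measurable
    have Hh: "H t = (\<integral>\<^sup>+ x. h t x \<partial>lborel)" for t
    proof -
      have "emeasure (lborel :: ('a \<times> 'a) measure) (E t) = emeasure (lborel \<Otimes>\<^sub>M lborel) (E t)"
        by (simp add: lborel_prod)
      also have "\<dots> = (\<integral>\<^sup>+ x. emeasure lborel (Pair x -` E t) \<partial>lborel)"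
        by (rule lborel.emeasure_pair_measure_alt[OF Em])
      finally show ?thesis unfolding H_def h_def
        by (simp add: nn_integral_cmult[OF lborel.measurable_emeasure_Pair[OF Em]])
    qed
    have ev: "\<forall>\<^sub>F t in at_top. L x \<le> h t x" for x
      using key[OF assms fm der[rule_format, of x]] unfolding L_def h_def sec c0_def .
    have LH: "(\<integral>\<^sup>+ x. L x \<partial>lborel) \<le> Liminf at_top H"
    proof (rule ccontr)
      assume "\<not> ?thesis"
      then obtain y where y: "y < (\<integral>\<^sup>+ x. L x \<partial>lborel)" and ny: "\<not> (\<forall>\<^sub>F t in at_top. y < H t)"
        unfolding le_Liminf_iff by blast
      have "\<forall>n::nat. \<exists>t. t \<ge> real n \<and> H t \<le> y"
        using ny unfolding eventually_at_top_linorder by (meson not_less)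
      then obtain tn where "\<forall>n. tn n \<ge> real n \<and> H (tn n) \<le> y" using choice[of "\<lambda>n t. t \<ge> real n \<and> H t \<le> y"] by blast
      hence tn: "\<And>n. tn n \<ge> real n" "\<And>n. H (tn n) \<le> y" by auto
      have "(\<integral>\<^sup>+ x. L x \<partial>lborel) \<le> (\<integral>\<^sup>+ x. liminf (\<lambda>n. h (tn n) x) \<partial>lborel)"
      proof (rule nn_integral_mono)
        fix x
        obtain T where T: "\<And>t. t \<ge> T \<Longrightarrow> L x \<le> h t x"
          using ev[of x] unfolding eventually_at_top_linorder by blast
        have "\<forall>\<^sub>F n in sequentially. L x \<le> h (tn n) x"
          unfolding eventually_sequentially
        proof (intro exI[of _ "nat \<lceil>T\<rceil>"] allI impI)
          fix n assume "nat \<lceil>T\<rceil> \<le> n"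
          hence "T \<le> real n" by linarith
          thus "L x \<le> h (tn n) x" using T tn(1)[of n] by simp
        qed
        thus "L x \<le> liminf (\<lambda>n. h (tn n) x)" by (rule Liminf_bounded)
      qed
      also have "\<dots> \<le> liminf (\<lambda>n. integral\<^sup>N lborel (h (tn n)))"
        by (rule nn_integral_liminf, rule hm)
      also have "\<dots> \<le> y"
      proof (rule Liminf_le)
        show "\<forall>\<^sub>F n in sequentially. integral\<^sup>N lborel (h (tn n)) \<le> y"
        proof (rule always_eventually, rule allI)
          fix n show "integral\<^sup>N lborel (h (tn n)) \<le> y" using tn(2)[of n] Hh[of "tn n"] by simp
        qed
      qed simp
      finally show False using y by simp
    qed
    have "(\<integral>\<^sup>+ x. ennreal ((ln (1 + norm (g x))) powr p) \<partial>lborel) = (\<integral>\<^sup>+ x. ennreal C * L x \<partial>lborel)"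
    proof (rule nn_integral_cong)
      fix x
      have "ln (1 + norm (g x)) powr p = C * (c0 * (ln (1 + norm (g x)) / 6) powr p)"
      proof -
        have "(ln (1 + norm (g x)) / 6) powr p = ln (1 + norm (g x)) powr p / 6 powr p"
          by (rule powr_divide; simp)
        thus ?thesis using c0 unfolding C_def by (simp add: field_simps)
      qed
      thus "ennreal ((ln (1 + norm (g x))) powr p) = ennreal C * L x"
        unfolding L_def using C c0 by (subst ennreal_mult[symmetric]) auto
    qed
    also have "\<dots> = ennreal C * (\<integral>\<^sup>+ x. L x \<partial>lborel)" by (rule nn_integral_cmult[OF Lm])
    also have "\<dots> \<le> ennreal C * Liminf at_top H" by (intro mult_left_mono LH) auto
    finally show "(\<integral>\<^sup>+ x. ennreal ((ln (1 + norm (g x))) powr p) \<partial>lborel)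
         \<le> ennreal C * Liminf at_top (\<lambda>t::real. ennreal (t powr p) *
              emeasure (lborel :: ('a \<times> 'a) measure)
                {(x, y). ln (1 + \<bar>f x - f y\<bar> / norm (x - y)) / norm (x - y) powr (real DIM('a) / p) > t})"
      unfolding H_def E_def .
  qed
qed

end
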